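(* Let $h:\mathbb{R}\to\mathbb{R}$ be applied entrywise, and consider the empirical risk $$\ell\big((W_j,b_j)_{j=1}^2\big)=\tfrac12\big\|W_2\,h(W_1X+b_1\mathbf{1}_3^T)+b_2\mathbf{1}_3^T-Y\big\|_F^2,$$ with $W_1\in\mathbb{R}^{2\times 2}$, $b_1\in\mathbb{R}^2$, $W_2\in\mathbb{R}^{1\times 2}$, $b_2\in\mathbb{R}$, and dataset $$X=\begin{bmatrix}1&0&\tfrac12\\0&1&\tfrac12\end{bmatrix},\qquad Y=\begin{bmatrix}0&0&1\end{bmatrix}.$$ Then: 1. If there exist $v_1,v_2,v_3,v_4\in\mathbb{R}$ such that (C2.1) $h(v_1)h(v_4)=h(v_2)h(v_3)$ and (C2.2) $h(v_1)\,h\!\left(\frac{v_3+v_4}{2}\right)\ne h(v_3)\,h\!\left(\frac{v_1+v_2}{2}\right)$, then there is a tuple $(\tilde W_j,\tilde b_j)_{j=1}^2$ at which $\ell=0$. 2. If there exist $v_1,v_2,u_1,u_2\in\mathbb{R}$ such that (C2.3) $u_1h(v_1)+u_2h(v_2)=\tfrac13$; (C2.4) $h$ is infinitely differentiable at $v_1$ and at $v_2$; (C2.5) there is a constant $c>0$ with $|h^{(n)}(v_1)|\le c^n n!$ and $|h^{(n)}(v_2)|\le c^n n!$ for all $n\ge1$; (C2.6) $(u_1h'(v_1))^2+\frac{u_1h''(v_1)}{3}>0$; (C2.7) $(u_1h'(v_1)\,u_2h'(v_2))^2<\Big((u_1h'(v_1))^2+\frac{u_1h''(v_1)}{3}\Big)\Big((u_2h'(v_2))^2+\frac{u_2h''(v_2)}{3}\Big)$,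 then there exists a tuple $(\hat W_j,\hat b_j)_{j=1}^2$ such that the output of the network equals the output of the linear least squares model (fitting $Y$ by $R\tilde X$ with $\tilde X=[X^T\ \mathbf{1}_3]^T$), the risk is $\ell((\hat W_j,\hat b_j)_{j=1}^2)=\tfrac13$, and $(\hat W_j,\hat b_j)_{j=1}^2$ is a local minimum of $\ell$.
   Context: $\mathbf{1}_3$ is the all-ones column vector in $\mathbb{R}^3$; $h^{(n)}$ denotes the $n$-th derivative of $h$, and $h'$, $h''$ the first and second derivatives. *)

theory Defs
  imports "HOL-Analysis.Analysis"
begin

text \<open>Matrices are HOL-Analysis matrices: real^'n^'m is an m-by-n matrix
 (outer index = row). Parameter tuple (W1, b1, W2, b2) with
 W1 : 2x2, b1 : 2-vector, W2 : 1x2, b2 : 1-vector (a scalar).\<close>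

type_synonym params = "(real^2^2) \<times> (real^2) \<times> (real^2^1) \<times> (real^1)"

definition Xd :: "real^3^2" where
  "Xd = (\<chi> i j. if i = 1 then (if j = 1 then 1 else if j = 2 then 0 else 1/2)
                          else (if j = 1 then 0 else if j = 2 then 1 else 1/2))"

definition Yd :: "real^3^1" where
  "Yd = (\<chi> i j. if j = 3 then 1 else 0)"

definition Xt :: "real^3^3" where
  "Xt = (\<chi> i j. if i = 1 then (if j = 1 then 1 else if j = 2 then 0 else 1/2)
          else if i = 2 then (if j = 1 then 0 else if j = 2 then 1 else 1/2)
          else 1)"

definition net_out :: "(real \<Rightarrow> real) \<Rightarrow> params \<Rightarrow> real^3^1" where
  "net_out h p = (case p of (W1, b1, W2, b2) \<Rightarrow>
      W2 ** (\<chi> i j. h ((W1 ** Xd) $ i $ j + b1 $ i)) + (\<chi> i j. b2 $ i))"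

definition frob_sq :: "real^'n^'m \<Rightarrow> real" where
  "frob_sq M = (\<Sum>i\<in>UNIV. \<Sum>j\<in>UNIV. (M $ i $ j)^2)"

definition risk :: "(real \<Rightarrow> real) \<Rightarrow> params \<Rightarrow> real" where
  "risk h p = 1/2 * frob_sq (net_out h p - Yd)"

definition lsq_risk :: "real^3^1 \<Rightarrow> real" where
  "lsq_risk R = 1/2 * frob_sq (R ** Xt - Yd)"

definition is_lsq :: "real^3^1 \<Rightarrow> bool" where
  "is_lsq R \<longleftrightarrow> (\<forall>R'. lsq_risk R \<le> lsq_risk R')"

text \<open>Local minimum in parameter space (product metric = Euclidean metric on R^9).\<close>
definition local_min :: "('a::metric_space \<Rightarrow> real) \<Rightarrow> 'a \<Rightarrow> bool" where
  "local_min f x \<longleftrightarrow> (\<exists>e>0. \<forall>y. dist y x < e \<longrightarrow> f x \<le> f y)"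

definition nderiv :: "nat \<Rightarrow> (real \<Rightarrow> real) \<Rightarrow> real \<Rightarrow> real" where
  "nderiv n h = (deriv ^^ n) h"

definition inf_diff_at :: "(real \<Rightarrow> real) \<Rightarrow> real \<Rightarrow> bool" where
  "inf_diff_at h v \<longleftrightarrow>
     (\<forall>n. \<exists>e>0. \<forall>x\<in>ball v e. \<forall>k\<le>n. nderiv k h differentiable (at x))"

end

theory Submission
  imports Defs
begin

lemma nderiv_Suc: "nderiv (Suc m) h = deriv (nderiv m h)"
  by (simp add: nderiv_def)

lemma unit_lt:
  fixes h :: "real \<Rightarrow> real"
  assumes D: "\<forall>x\<in>{P..Q}. \<forall>k\<le>2. nderiv k h differentiable (at x)"
    and PQ: "P < Q"
  shows "\<exists>\<eta> s t. \<eta> \<in> {P..Q} \<and> s \<in> {P..Q} \<and> t \<in> {P..Q} \<and>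
     h P - h Q = deriv h \<eta> * (P - Q) \<and>
     h ((P+Q)/2) - (h P + h Q)/2 = - (deriv (deriv h) s + deriv (deriv h) t) * (P - Q)^2 / 16"
proof -
  have der: "DERIV (nderiv m h) x :> nderiv (Suc m) h x" if "m < 2" "P \<le> x" "x \<le> Q" for m x
  proof -
    have "nderiv m h differentiable (at x)" using D that by auto
    then show ?thesis unfolding nderiv_Suc by (simp add: DERIV_deriv_iff_real_differentiable)
  qed
  have n0: "nderiv 0 h = h" by (simp add: nderiv_def)
  have n1: "nderiv 1 h = deriv h" by (simp add: nderiv_def)
  have n2: "nderiv 2 h = deriv (deriv h)" by (simp add: nderiv_def numeral_2_eq_2)
  have n1s: "nderiv (Suc 0) h = deriv h" by (simp add: nderiv_def)
  have n2s: "nderiv (Suc (Suc 0)) h = deriv (deriv h)" by (simp add: nderiv_def)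
  obtain \<eta> where e: "P < \<eta>" "\<eta> < Q" "h Q - h P = (Q - P) * deriv h \<eta>"
    using MVT2[OF PQ, of h "nderiv 1 h"] der[of 0] n0 n1 by auto
  define M where "M = (P+Q)/2"
  have M: "P < M" "M < Q" using PQ by (auto simp: M_def)
  obtain s where s: "M < s" "s < Q" "h Q = (\<Sum>m<2. (nderiv m h M / fact m) * (Q - M)^m) + (nderiv 2 h s / fact 2) * (Q - M)^2"
    using Taylor_up[of 2 "\<lambda>m. nderiv m h" h P Q M] der n0 M by auto
  obtain t where t: "P < t" "t < M" "h P = (\<Sum>m<2. (nderiv m h M / fact m) * (P - M)^m) + (nderiv 2 h t / fact 2) * (P - M)^2"
    using Taylor_down[of 2 "\<lambda>m. nderiv m h" h P Q M] der n0 M by auto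
  have s2: "h Q = h M + deriv h M * (Q - M) + deriv (deriv h) s / 2 * (Q - M)^2"
    using s(3) by (simp add: n0 n1s n2s numeral_2_eq_2)
  have t2: "h P = h M + deriv h M * (P - M) + deriv (deriv h) t / 2 * (P - M)^2"
    using t(3) by (simp add: n0 n1s n2s numeral_2_eq_2)
  have "h M - (h P + h Q)/2 = - (deriv (deriv h) s + deriv (deriv h) t) * (P - Q)^2 / 16"
    unfolding s2 t2 M_def by (simp add: field_simps power2_eq_square)
  then show ?thesis
    using e M s t by (intro exI[of _ \<eta>] exI[of _ s] exI[of _ t]) (auto simp: M_def algebra_simps)
qed

lemma unit_ball:
  fixes h :: "real \<Rightarrow> real"
  assumes D: "\<forall>x\<in>ball v r. \<forall>k\<le>2. nderiv k h differentiable (at x)"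
    and P: "P \<in> ball v r" and Q: "Q \<in> ball v r"
  shows "\<exists>\<eta> s t. \<bar>\<eta> - v\<bar> \<le> \<bar>P - v\<bar> + \<bar>Q - v\<bar> \<and> \<bar>s - v\<bar> \<le> \<bar>P - v\<bar> + \<bar>Q - v\<bar>
     \<and> \<bar>t - v\<bar> \<le> \<bar>P - v\<bar> + \<bar>Q - v\<bar> \<and>
     h P - h Q = deriv h \<eta> * (P - Q) \<and>
     h ((P+Q)/2) - (h P + h Q)/2 = - (deriv (deriv h) s + deriv (deriv h) t) * (P - Q)^2 / 16"
proof -
  have sub: "{a..b} \<subseteq> ball v r" if "a \<in> ball v r" "b \<in> ball v r" for a b
    using that by (auto simp: dist_real_def)
  consider "P < Q" | "P = Q" | "Q < P" by linarith
  then show ?thesis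
  proof cases
    case 1
    have "\<forall>x\<in>{P..Q}. \<forall>k\<le>2. nderiv k h differentiable (at x)" using D sub[OF P Q] by blast
    from unit_lt[OF this 1] obtain \<eta> s t where
      "\<eta> \<in> {P..Q}" "s \<in> {P..Q}" "t \<in> {P..Q}"
      "h P - h Q = deriv h \<eta> * (P - Q)"
      "h ((P+Q)/2) - (h P + h Q)/2 = - (deriv (deriv h) s + deriv (deriv h) t) * (P - Q)^2 / 16"
      by blast
    then show ?thesis by (intro exI[of _ \<eta>] exI[of _ s] exI[of _ t]) auto
  next
    case 2
    then show ?thesis by (intro exI[of _ P] exI[of _ P] exI[of _ P]) auto
  next
    case 3
    have "\<forall>x\<in>{Q..P}. \<forall>k\<le>2. nderiv k h differentiable (at x)" using D sub[OF Q P] by blast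
    from unit_lt[OF this 3] obtain \<eta> s t where
      "\<eta> \<in> {Q..P}" "s \<in> {Q..P}" "t \<in> {Q..P}"
      "h Q - h P = deriv h \<eta> * (Q - P)"
      "h ((Q+P)/2) - (h Q + h P)/2 = - (deriv (deriv h) s + deriv (deriv h) t) * (Q - P)^2 / 16"
      by blast
    then show ?thesis
      by (intro exI[of _ \<eta>] exI[of _ s] exI[of _ t]) (auto simp: algebra_simps power2_eq_square)
  qed
qed

lemma unit_filter:
  fixes h :: "real \<Rightarrow> real"
  assumes D: "\<forall>x\<in>ball v r. \<forall>k\<le>2. nderiv k h differentiable (at x)" and r: "r > 0"
    and P: "(P \<longlongrightarrow> v) F" and Q: "(Q \<longlongrightarrow> v) F"
  shows "\<exists>\<eta> s t. (\<eta> \<longlongrightarrow> v) F \<and> (s \<longlongrightarrow> v) F \<and> (t \<longlongrightarrow> v) F \<and>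
     (\<forall>\<^sub>F x in F. h (P x) - h (Q x) = deriv h (\<eta> x) * (P x - Q x) \<and>
       h ((P x + Q x)/2) - (h (P x) + h (Q x))/2
         = - (deriv (deriv h) (s x) + deriv (deriv h) (t x)) * (P x - Q x)^2 / 16)"
proof -
  define R where "R = (\<lambda>x (z :: real \<times> real \<times> real).
     \<bar>fst z - v\<bar> \<le> \<bar>P x - v\<bar> + \<bar>Q x - v\<bar> \<and> \<bar>fst (snd z) - v\<bar> \<le> \<bar>P x - v\<bar> + \<bar>Q x - v\<bar>
     \<and> \<bar>snd (snd z) - v\<bar> \<le> \<bar>P x - v\<bar> + \<bar>Q x - v\<bar> \<and>
     h (P x) - h (Q x) = deriv h (fst z) * (P x - Q x) \<and>
     h ((P x + Q x)/2) - (h (P x) + h (Q x))/2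
       = - (deriv (deriv h) (fst (snd z)) + deriv (deriv h) (snd (snd z))) * (P x - Q x)^2 / 16)"
  define T where "T = (\<lambda>x. SOME z. R x z)"
  have ev: "\<forall>\<^sub>F x in F. R x (T x)"
  proof -
    have "\<forall>\<^sub>F x in F. dist (P x) v < r" using tendstoD[OF P r] .
    moreover have "\<forall>\<^sub>F x in F. dist (Q x) v < r" using tendstoD[OF Q r] .
    ultimately show ?thesis
    proof eventually_elim
      case (elim x)
      then have "P x \<in> ball v r" "Q x \<in> ball v r" by (auto simp: dist_commute)
      from unit_ball[OF D this] obtain \<eta> s t where "R x (\<eta>, s, t)" unfolding R_def by auto
      then show ?case unfolding T_def by (rule someI)
    qed
  qed
  have g: "((\<lambda>x. \<bar>P x - v\<bar> + \<bar>Q x - v\<bar>) \<longlongrightarrow> 0) F"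
  proof -
    have "((\<lambda>x. P x - v) \<longlongrightarrow> 0) F" "((\<lambda>x. Q x - v) \<longlongrightarrow> 0) F"
      using P Q by (simp_all add: Lim_null[symmetric])
    then show ?thesis by (intro tendsto_add_zero tendsto_rabs_zero)
  qed
  have lim: "(f \<longlongrightarrow> v) F" if "\<forall>\<^sub>F x in F. \<bar>f x - v\<bar> \<le> \<bar>P x - v\<bar> + \<bar>Q x - v\<bar>" for f
  proof -
    have "((\<lambda>x. f x - v) \<longlongrightarrow> 0) F"
      by (rule Lim_null_comparison[OF _ g]) (use that in simp)
    then show ?thesis by (simp add: Lim_null[of f])
  qed
  show ?thesis
  proof (intro exI conjI)
    show "((\<lambda>x. fst (T x)) \<longlongrightarrow> v) F"
      by (rule lim) (use ev in \<open>eventually_elim, simp add: R_def\<close>)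
    show "((\<lambda>x. fst (snd (T x))) \<longlongrightarrow> v) F"
      by (rule lim) (use ev in \<open>eventually_elim, simp add: R_def\<close>)
    show "((\<lambda>x. snd (snd (T x))) \<longlongrightarrow> v) F"
      by (rule lim) (use ev in \<open>eventually_elim, simp add: R_def\<close>)
    show "\<forall>\<^sub>F x in F. h (P x) - h (Q x) = deriv h (fst (T x)) * (P x - Q x) \<and>
       h ((P x + Q x)/2) - (h (P x) + h (Q x))/2
         = - (deriv (deriv h) (fst (snd (T x))) + deriv (deriv h) (snd (snd (T x)))) * (P x - Q x)^2 / 16"
      using ev by eventually_elim (simp add: R_def)
  qed
qed

lemma risk_formula:
  "risk h (W1, b1, W2, b2) = 1/2 * (
     (W2$1$1 * h (W1$1$1 + b1$1) + W2$1$2 * h (W1$2$1 + b1$2) + b2$1)^2 +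
     (W2$1$1 * h (W1$1$2 + b1$1) + W2$1$2 * h (W1$2$2 + b1$2) + b2$1)^2 +
     (W2$1$1 * h ((W1$1$1 + b1$1 + (W1$1$2 + b1$1))/2) + W2$1$2 * h ((W1$2$1 + b1$2 + (W1$2$2 + b1$2))/2) + b2$1 - 1)^2)"
  unfolding risk_def frob_sq_def net_out_def matrix_matrix_mult_def Xd_def Yd_def
  by (simp add: sum_2 sum_3 field_simps)

lemma lsq_formula:
  "lsq_risk R = 1/2 * ((R$1$1 + R$1$3)^2 + (R$1$2 + R$1$3)^2 + (R$1$1/2 + R$1$2/2 + R$1$3 - 1)^2)"
  unfolding lsq_risk_def frob_sq_def matrix_matrix_mult_def Xt_def Yd_def
  by (simp add: sum_2 sum_3 field_simps)

lemma quad_nonneg: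
  fixes p1 p2 r1 r2 d1 d2 :: real
  assumes A: "p1^2 + r1 > 0" and det: "(p1*p2)^2 < (p1^2 + r1) * (p2^2 + r2)"
  shows "(p1*d1 + p2*d2)^2 + r1*d1^2 + r2*d2^2 \<ge> 0"
proof -
  let ?A = "p1^2 + r1"
  have eq: "?A * ((p1*d1 + p2*d2)^2 + r1*d1^2 + r2*d2^2)
      = (?A*d1 + p1*p2*d2)^2 + (?A * (p2^2 + r2) - (p1*p2)^2) * d2^2"
    by (simp add: algebra_simps power2_eq_square)
  have "0 \<le> (?A*d1 + p1*p2*d2)^2 + (?A * (p2^2 + r2) - (p1*p2)^2) * d2^2"
    using det by (intro add_nonneg_nonneg) auto
  then have "0 \<le> ?A * ((p1*d1 + p2*d2)^2 + r1*d1^2 + r2*d2^2)" using eq by simp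
  then show ?thesis using A by (simp add: zero_le_mult_iff)
qed

lemma final_alg:
  fixes y1 y2 y3 p1 p2 r1 r2 d1 d2 :: real
  assumes A: "p1^2 + r1 > 0" and det: "(p1*p2)^2 < (p1^2 + r1) * (p2^2 + r2)"
    and e: "y1 - y2 = p1*d1 + p2*d2"
    and D: "y3 - (y1+y2)/2 = -(3/8) * (r1*d1^2 + r2*d2^2)"
  shows "1/3 \<le> 1/2 * (y1^2 + y2^2 + (y3 - 1)^2)"
proof -
  define E where "E = (y1 - y2)/2"
  define DD where "DD = y3 - (y1+y2)/2"
  define m where "m = (y1+y2)/2"
  have q: "(p1*d1 + p2*d2)^2 + r1*d1^2 + r2*d2^2 \<ge> 0" by (rule quad_nonneg[OF A det])
  have k: "3*E^2 - 2*DD \<ge> 0"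
  proof -
    have E': "E = (p1*d1 + p2*d2)/2" unfolding E_def using e by simp
    have D': "DD = -(3/8) * (r1*d1^2 + r2*d2^2)" unfolding DD_def using D by simp
    have "3*E^2 - 2*DD = 3/4 * ((p1*d1 + p2*d2)^2 + r1*d1^2 + r2*d2^2)"
      unfolding E' D' by (simp add: algebra_simps power2_eq_square)
    then show ?thesis using q by simp
  qed
  have y1: "y1 = m + E" and y2: "y2 = m - E" and y3: "y3 = m + DD"
    by (simp_all add: m_def E_def DD_def field_simps)
  have "3*(y1^2 + y2^2 + (y3 - 1)^2) - 2 = (3*m - (1 - DD))^2 + 2*DD^2 + 2*(3*E^2 - 2*DD)"
    unfolding y1 y2 y3 power2_eq_square by (simp add: algebra_simps)
  moreover have "(3*m - (1 - DD))^2 + 2*DD^2 + 2*(3*E^2 - 2*DD) \<ge> 0"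
    using k by (intro add_nonneg_nonneg) auto
  ultimately show ?thesis by linarith
qed

lemma part1:
  fixes h :: "real \<Rightarrow> real"
  assumes c1: "h v1 * h v4 = h v2 * h v3"
    and c2: "h v1 * h ((v3 + v4) / 2) \<noteq> h v3 * h ((v1 + v2) / 2)"
  shows "\<exists>p. risk h p = 0"
proof -
  define K where "K = h v3 * h ((v1 + v2) / 2) - h v1 * h ((v3 + v4) / 2)"
  have K: "K \<noteq> 0" using c2 by (simp add: K_def)
  define W1 :: "real^2^2" where
    "W1 = (\<chi> i j. if i = 1 then (if j = 1 then v1 else v2) else (if j = 1 then v3 else v4))"
  define W2 :: "real^2^1" where "W2 = (\<chi> i j. if j = 1 then h v3 / K else - h v1 / K)"
  have "risk h (W1, 0, W2, 0) = 1/2 * (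
     (h v3 / K * h v1 - h v1 / K * h v3)^2 + (h v3 / K * h v2 - h v1 / K * h v4)^2 +
     (h v3 / K * h ((v1 + v2)/2) - h v1 / K * h ((v3 + v4)/2) - 1)^2)"
    unfolding risk_formula W1_def W2_def by simp
  also have "\<dots> = 0"
  proof -
    have a: "h v3 / K * h v2 - h v1 / K * h v4 = 0" using c1 by (simp add: field_simps)
    have b: "h v3 / K * h ((v1 + v2)/2) - h v1 / K * h ((v3 + v4)/2) = 1"
    proof -
      have "h v3 / K * h ((v1 + v2)/2) - h v1 / K * h ((v3 + v4)/2)
          = (h v3 * h ((v1 + v2)/2) - h v1 * h ((v3 + v4)/2)) / K"
        by (simp add: diff_divide_distrib)
      also have "h v3 * h ((v1 + v2)/2) - h v1 * h ((v3 + v4)/2) = K" by (simp add: K_def)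
      finally show ?thesis using K by simp
    qed
    show ?thesis using a b by simp
  qed
  finally show ?thesis by blast
qed

lemma part2:
  fixes h :: "real \<Rightarrow> real"
  assumes c3: "u1 * h v1 + u2 * h v2 = 1/3"
    and d1: "inf_diff_at h v1" and d2: "inf_diff_at h v2"
    and c6: "(u1 * deriv h v1)^2 + u1 * deriv (deriv h) v1 / 3 > 0"
    and c7: "(u1 * deriv h v1 * (u2 * deriv h v2))^2 <
          ((u1 * deriv h v1)^2 + u1 * deriv (deriv h) v1 / 3) *
          ((u2 * deriv h v2)^2 + u2 * deriv (deriv h) v2 / 3)"
  shows "\<exists>p. (\<exists>R. is_lsq R \<and> net_out h p = R ** Xt) \<and>
               risk h p = 1/3 \<and> local_min (risk h) p"
proof -
  obtain r1 where r1: "r1 > 0" "\<forall>x\<in>ball v1 r1. \<forall>k\<le>2. nderiv k h differentiable (at x)"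
    using d1 unfolding inf_diff_at_def by blast
  obtain r2 where r2: "r2 > 0" "\<forall>x\<in>ball v2 r2. \<forall>k\<le>2. nderiv k h differentiable (at x)"
    using d2 unfolding inf_diff_at_def by blast
  have n1: "nderiv 1 h = deriv h" by (simp add: nderiv_def)
  have n2: "nderiv 2 h = deriv (deriv h)" by (simp add: nderiv_def numeral_2_eq_2)
  have cont: "isCont (deriv h) v" "isCont (deriv (deriv h)) v"
    if "\<forall>x\<in>ball v r. \<forall>k\<le>2. nderiv k h differentiable (at x)" "r > 0" for v r
  proof -
    have "nderiv 1 h differentiable (at v)" "nderiv 2 h differentiable (at v)"
      using that by auto
    then show "isCont (deriv h) v" "isCont (deriv (deriv h)) v"
      unfolding n1 n2 by (auto intro: differentiable_imp_continuous_within)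
  qed
  define p0 :: params where
    "p0 = (0, (\<chi> i. if i = 1 then v1 else v2), (\<chi> i j. if j = 1 then u1 else u2), 0)"
  define F where "F = nhds p0"
  have id: "((\<lambda>q. q) \<longlongrightarrow> p0) F" unfolding F_def by (rule filterlim_ident)
  define P1 where "P1 = (\<lambda>q::params. fst q $ 1 $ 1 + fst (snd q) $ 1)"
  define Q1 where "Q1 = (\<lambda>q::params. fst q $ 1 $ 2 + fst (snd q) $ 1)"
  define P2 where "P2 = (\<lambda>q::params. fst q $ 2 $ 1 + fst (snd q) $ 2)"
  define Q2 where "Q2 = (\<lambda>q::params. fst q $ 2 $ 2 + fst (snd q) $ 2)"
  define w1 where "w1 = (\<lambda>q::params. fst (snd (snd q)) $ 1 $ 1)"
  define w2 where "w2 = (\<lambda>q::params. fst (snd (snd q)) $ 1 $ 2)"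
  have lim0: "(f \<longlongrightarrow> f p0) F" if "continuous_on UNIV f" for f :: "params \<Rightarrow> real"
    using that unfolding F_def
    by (metis continuous_on_def isCont_def open_UNIV UNIV_I continuous_on_eq_continuous_at tendsto_at_iff_tendsto_nhds)
  have "(P1 \<longlongrightarrow> P1 p0) F" unfolding P1_def by (rule lim0) (intro continuous_intros)
  then have P1: "(P1 \<longlongrightarrow> v1) F" by (simp add: P1_def p0_def)
  have "(Q1 \<longlongrightarrow> Q1 p0) F" unfolding Q1_def by (rule lim0) (intro continuous_intros)
  then have Q1: "(Q1 \<longlongrightarrow> v1) F" by (simp add: Q1_def p0_def)
  have "(P2 \<longlongrightarrow> P2 p0) F" unfolding P2_def by (rule lim0) (intro continuous_intros)
  then have P2: "(P2 \<longlongrightarrow> v2) F" by (simp add: P2_def p0_def)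
  have "(Q2 \<longlongrightarrow> Q2 p0) F" unfolding Q2_def by (rule lim0) (intro continuous_intros)
  then have Q2: "(Q2 \<longlongrightarrow> v2) F" by (simp add: Q2_def p0_def)
  have "(w1 \<longlongrightarrow> w1 p0) F" unfolding w1_def by (rule lim0) (intro continuous_intros)
  then have w1: "(w1 \<longlongrightarrow> u1) F" by (simp add: w1_def p0_def)
  have "(w2 \<longlongrightarrow> w2 p0) F" unfolding w2_def by (rule lim0) (intro continuous_intros)
  then have w2: "(w2 \<longlongrightarrow> u2) F" by (simp add: w2_def p0_def)
  obtain e1 s1 t1 where
    e1: "(e1 \<longlongrightarrow> v1) F" and s1: "(s1 \<longlongrightarrow> v1) F" and t1: "(t1 \<longlongrightarrow> v1) F" and
    ev1: "\<forall>\<^sub>F x in F. h (P1 x) - h (Q1 x) = deriv h (e1 x) * (P1 x - Q1 x) \<and>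
       h ((P1 x + Q1 x)/2) - (h (P1 x) + h (Q1 x))/2
         = - (deriv (deriv h) (s1 x) + deriv (deriv h) (t1 x)) * (P1 x - Q1 x)^2 / 16"
    using unit_filter[OF r1(2) r1(1) P1 Q1] by blast
  obtain e2 s2 t2 where
    e2: "(e2 \<longlongrightarrow> v2) F" and s2: "(s2 \<longlongrightarrow> v2) F" and t2: "(t2 \<longlongrightarrow> v2) F" and
    ev2: "\<forall>\<^sub>F x in F. h (P2 x) - h (Q2 x) = deriv h (e2 x) * (P2 x - Q2 x) \<and>
       h ((P2 x + Q2 x)/2) - (h (P2 x) + h (Q2 x))/2
         = - (deriv (deriv h) (s2 x) + deriv (deriv h) (t2 x)) * (P2 x - Q2 x)^2 / 16"
    using unit_filter[OF r2(2) r2(1) P2 Q2] by blast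
  note c1 = cont[OF r1(2) r1(1)] and c2 = cont[OF r2(2) r2(1)]
  define pp1 where "pp1 = (\<lambda>q. w1 q * deriv h (e1 q))"
  define pp2 where "pp2 = (\<lambda>q. w2 q * deriv h (e2 q))"
  define rr1 where "rr1 = (\<lambda>q. w1 q * (deriv (deriv h) (s1 q) + deriv (deriv h) (t1 q)) / 6)"
  define rr2 where "rr2 = (\<lambda>q. w2 q * (deriv (deriv h) (s2 q) + deriv (deriv h) (t2 q)) / 6)"
  have Lp1: "(pp1 \<longlongrightarrow> u1 * deriv h v1) F" unfolding pp1_def
    by (intro tendsto_intros w1 isCont_tendsto_compose[OF c1(1) e1])
  have Lp2: "(pp2 \<longlongrightarrow> u2 * deriv h v2) F" unfolding pp2_def
    by (intro tendsto_intros w2 isCont_tendsto_compose[OF c2(1) e2])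
  have "(rr1 \<longlongrightarrow> u1 * (deriv (deriv h) v1 + deriv (deriv h) v1) / 6) F" unfolding rr1_def
    by (intro tendsto_intros w1 isCont_tendsto_compose[OF c1(2) s1] isCont_tendsto_compose[OF c1(2) t1]) auto
  then have Lr1: "(rr1 \<longlongrightarrow> u1 * deriv (deriv h) v1 / 3) F" by simp
  have "(rr2 \<longlongrightarrow> u2 * (deriv (deriv h) v2 + deriv (deriv h) v2) / 6) F" unfolding rr2_def
    by (intro tendsto_intros w2 isCont_tendsto_compose[OF c2(2) s2] isCont_tendsto_compose[OF c2(2) t2]) auto
  then have Lr2: "(rr2 \<longlongrightarrow> u2 * deriv (deriv h) v2 / 3) F" by simp
  have evA: "\<forall>\<^sub>F q in F. (pp1 q)^2 + rr1 q > 0"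
    by (rule order_tendstoD(1)[OF tendsto_add[OF tendsto_power[OF Lp1] Lr1] c6])
  have evD: "\<forall>\<^sub>F q in F. ((pp1 q)^2 + rr1 q) * ((pp2 q)^2 + rr2 q) - (pp1 q * pp2 q)^2 > 0"
  proof (rule order_tendstoD(1))
    show "((\<lambda>q. ((pp1 q)^2 + rr1 q) * ((pp2 q)^2 + rr2 q) - (pp1 q * pp2 q)^2) \<longlongrightarrow>
       ((u1 * deriv h v1)^2 + u1 * deriv (deriv h) v1 / 3) *
          ((u2 * deriv h v2)^2 + u2 * deriv (deriv h) v2 / 3) - (u1 * deriv h v1 * (u2 * deriv h v2))^2) F"
      by (intro tendsto_intros Lp1 Lp2 Lr1 Lr2)
  qed (use c7 in simp)
  have evR: "\<forall>\<^sub>F q in F. 1/3 \<le> risk h q"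
    using ev1 ev2 evA evD
  proof eventually_elim
    case (elim q)
    obtain W1 b1 W2 b2 where q: "q = (W1, b1, W2, b2)" by (cases q) auto
    have E1: "h (P1 q) - h (Q1 q) = deriv h (e1 q) * (P1 q - Q1 q)"
      and M1: "h ((P1 q + Q1 q)/2) - (h (P1 q) + h (Q1 q))/2
         = - (deriv (deriv h) (s1 q) + deriv (deriv h) (t1 q)) * (P1 q - Q1 q)^2 / 16"
      and E2: "h (P2 q) - h (Q2 q) = deriv h (e2 q) * (P2 q - Q2 q)"
      and M2: "h ((P2 q + Q2 q)/2) - (h (P2 q) + h (Q2 q))/2
         = - (deriv (deriv h) (s2 q) + deriv (deriv h) (t2 q)) * (P2 q - Q2 q)^2 / 16"
      using elim by blast+
    have wq: "W2$1$1 = w1 q" "W2$1$2 = w2 q" "W1$1$1 + b1$1 = P1 q" "W1$1$2 + b1$1 = Q1 q"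
      "W1$2$1 + b1$2 = P2 q" "W1$2$2 + b1$2 = Q2 q"
      by (simp_all add: q w1_def w2_def P1_def Q1_def P2_def Q2_def)
    have eA: "w1 q * (h (P1 q) - h (Q1 q)) + w2 q * (h (P2 q) - h (Q2 q)) =
          pp1 q * (P1 q - Q1 q) + pp2 q * (P2 q - Q2 q)"
      unfolding E1 E2 pp1_def pp2_def by simp
    have eD: "w1 q * (h ((P1 q + Q1 q)/2) - (h (P1 q) + h (Q1 q))/2) +
              w2 q * (h ((P2 q + Q2 q)/2) - (h (P2 q) + h (Q2 q))/2) =
          - (3 / 8) * (rr1 q * (P1 q - Q1 q)\<^sup>2 + rr2 q * (P2 q - Q2 q)\<^sup>2)"
      unfolding M1 M2 rr1_def rr2_def by (simp add: field_simps)
    show ?case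
      unfolding q risk_formula unfolding wq
    proof (rule final_alg[where ?p1.0 = "pp1 q" and ?r1.0 = "rr1 q" and ?p2.0 = "pp2 q" and ?r2.0 = "rr2 q"
          and ?d1.0 = "P1 q - Q1 q" and ?d2.0 = "P2 q - Q2 q"])
      show "0 < (pp1 q)\<^sup>2 + rr1 q" using elim by simp
      show "(pp1 q * pp2 q)\<^sup>2 < ((pp1 q)\<^sup>2 + rr1 q) * ((pp2 q)\<^sup>2 + rr2 q)" using elim by simp
    qed (use eA eD in \<open>simp_all add: algebra_simps, simp add: field_simps\<close>)
  qed
  have out: "net_out h p0 = (\<chi> i j. if j = 3 then 1/3 else 0) ** Xt"
    unfolding net_out_def p0_def matrix_matrix_mult_def Xd_def Xt_def
    using c3 by (simp add: sum_2 sum_3 vec_eq_iff)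
  have lsq: "is_lsq (\<chi> i j. if j = 3 then 1/3 else 0)"
    unfolding is_lsq_def
  proof
    fix R' :: "real^3^1"
    define a where "a = R'$1$1 + R'$1$3"
    define b where "b = R'$1$2 + R'$1$3"
    have eq: "lsq_risk R' = 1/2 * (a^2 + b^2 + ((a+b)/2 - 1)^2)"
    proof -
      have "R'$1$1/2 + R'$1$2/2 + R'$1$3 - 1 = (a+b)/2 - 1" by (simp add: a_def b_def field_simps)
      then show ?thesis unfolding lsq_formula by (simp only: a_def[symmetric] b_def[symmetric])
    qed
    have "a^2 + b^2 + ((a+b)/2 - 1)^2 - 2/3 = 3*((a+b)/2 - 1/3)^2 + (a-b)^2/2"
      by (simp add: power2_eq_square field_simps)
    moreover have "3*((a+b)/2 - 1/3)^2 + (a-b)^2/2 \<ge> 0" by simp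
    ultimately have "2/3 \<le> a^2 + b^2 + ((a+b)/2 - 1)^2" by linarith
    then have "1/3 \<le> lsq_risk R'" unfolding eq by simp
    moreover have "lsq_risk (\<chi> i j. if j = 3 then 1/3 else 0) = 1/3"
      unfolding lsq_formula by (simp add: power2_eq_square)
    ultimately show "lsq_risk (\<chi> i j. if j = 3 then 1/3 else 0) \<le> lsq_risk R'" by simp
  qed
  have r0: "risk h p0 = 1/3"
    unfolding p0_def risk_formula by (simp add: c3 power2_eq_square)
  have "local_min (risk h) p0"
    using evR unfolding local_min_def F_def eventually_nhds_metric r0 by auto
  then show ?thesis using out lsq r0 by blast
qed

theorem theorem2:
  fixes h :: "real \<Rightarrow> real"
  shows
   "((\<exists>v1 v2 v3 v4 :: real.
        h v1 * h v4 = h v2 * h v3 \<and>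
        h v1 * h ((v3 + v4) / 2) \<noteq> h v3 * h ((v1 + v2) / 2))
      \<longrightarrow> (\<exists>p. risk h p = 0))
    \<and>
    ((\<exists>v1 v2 u1 u2 :: real.
        u1 * h v1 + u2 * h v2 = 1/3 \<and>
        inf_diff_at h v1 \<and> inf_diff_at h v2 \<and>
        (\<exists>c>0. \<forall>n\<ge>1. \<bar>nderiv n h v1\<bar> \<le> c ^ n * fact n \<and>
                        \<bar>nderiv n h v2\<bar> \<le> c ^ n * fact n) \<and>
        (u1 * deriv h v1)^2 + u1 * deriv (deriv h) v1 / 3 > 0 \<and>
        (u1 * deriv h v1 * (u2 * deriv h v2))^2 <
          ((u1 * deriv h v1)^2 + u1 * deriv (deriv h) v1 / 3) *
          ((u2 * deriv h v2)^2 + u2 * deriv (deriv h) v2 / 3))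
      \<longrightarrow> (\<exists>p. (\<exists>R. is_lsq R \<and> net_out h p = R ** Xt) \<and>
               risk h p = 1/3 \<and> local_min (risk h) p))"
  using part1 part2 by blast

end
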